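(* In the setting described in the context (in particular under the standing assumption that, for every $Q\in\Gamma$, the tie sets are $D$-negligible so that the lower-level problem LL$(Q)$ has a unique solution $\widehat{A}(Q)$), the bilevel problem $$\min_{Q\in\Gamma}\ \mathcal{F}(Q)=\sum_{i=1}^{\rho}\Bigl[I_i\Bigl(\int_{P_i^{q_i}}B(q)\,dq\Bigr)+C_i\Bigl(\int_{\widehat{A}_i(Q)}D(q)\,dq\Bigr)\Bigr]+L\Bigl(\int_{P_1^{q_1}\cup\dots\cup P_\rho^{q_\rho}}D(q)\,dq\Bigr)$$ admits an optimal solution $Q^*\in\Gamma$.
   Context: Let $\Omega\subseteq\mathbb{R}^2$ be compact Borel; $D:\Omega\to[0,\infty)$, $D\in\mathcal{L}^2(\Omega)$, $\int_\Omega D=1$ (demand density); a set $Z$ is $D$-negligible if $\int_Z D=0$. $B:\Omega\to[0,\infty)$, $B\in\mathcal{L}^2(\Omega)$, $\int_\Omega B<\infty$ (base installation cost density). Let $\rho\in\mathbb{N}$; for each $i$, $P_i$ is a compact set that is the closure of a nonempty open connected set, with a root point $p_i\in P_i$, and $P_i^{q}:=P_i+(q-p_i)$ for $q\in\mathbb{R}^2$. $\Omega_i=\{q:P_i^q\subseteq\Omega\}$, $\Gamma=\{(q_1,\dots,q_\rho)\in\Omega_1\times\dots\times\Omega_\rho:\operatorname{int}(P_i^{q_i})\cap\operatorname{int}(P_j^{q_j})=\emptyset\ \forall i\ne j\}$, assumed nonempty. For $Q\in\Gamma$, $\Omega(Q)=\Omega\setminus\bigcup_i\operatorname{int}(P_i^{q_i})$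 and $\mathcal{A}_\rho(Q)$ is the set of $\rho$-tuples of pairwise disjoint Borel sets whose union is $\Omega(Q)$ up to a $D$-negligible set. For each $i$, $u_i:\mathbb{R}^2\times\mathbb{R}^2\to\mathbb{R}$ is continuous and $a_i>0$. LL$(Q)$ is the problem of minimizing $\sum_{i=1}^\rho\int_{A_i}[a_i+u_i(q,q_i)]D(q)\,dq$ over $(A_1,\dots,A_\rho)\in\mathcal{A}_\rho(Q)$. Standing assumption: for every $Q=(q_1,\dots,q_\rho)\in\Gamma$ and all $i\neq j$, the set $\{q\in\Omega(Q):a_i+u_i(q,q_i)=a_j+u_j(q,q_j)\}$ is $D$-negligible; then LL$(Q)$ has a unique solution (up to $D$-negligible sets) $\widehat{A}(Q)=(\widehat{A}_1(Q),\dots,\widehat{A}_\rho(Q))$ with $\widehat{A}_i(Q)=\{q\in\Omega(Q):a_i+u_i(q,q_i)<a_j+u_j(q,q_j)\ \forall j\ne i\}$. Cost functions: $I_i:\mathbb{R}\to[0,\infty)$ non-decreasing and continuous (installation), $C_i:[0,1]\to[0,\infty)$ non-decreasing and continuous (congestion), $L:[0,1]\to[0,\infty)$ non-decreasing and continuous (lost demand). *)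

theory Defs
  imports "HOL-Analysis.Analysis" "HOL-Library.FuncSet"
begin

type_synonym pt = "real ^ 2"

definition translate_poly :: "pt set \<Rightarrow> pt \<Rightarrow> pt \<Rightarrow> pt set" where
  "translate_poly P p q = (\<lambda>x. x + (q - p)) ` P"

definition D_negligible :: "(pt \<Rightarrow> real) \<Rightarrow> pt set \<Rightarrow> bool" where
  "D_negligible D Z \<longleftrightarrow> (LINT q:Z|lebesgue. D q) = 0"

definition feas_root :: "pt set \<Rightarrow> pt set \<Rightarrow> pt \<Rightarrow> pt set" where
  "feas_root \<Omega> P p = {q. translate_poly P p q \<subseteq> \<Omega>}"

definition Gamma :: "pt set \<Rightarrow> nat \<Rightarrow> (nat \<Rightarrow> pt set) \<Rightarrow> (nat \<Rightarrow> pt) \<Rightarrow> (nat \<Rightarrow> pt) set" where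
  "Gamma \<Omega> \<rho> P p = {Q. Q \<in> {..<\<rho>} \<rightarrow>\<^sub>E UNIV
      \<and> (\<forall>i<\<rho>. Q i \<in> feas_root \<Omega> (P i) (p i))
      \<and> (\<forall>i<\<rho>. \<forall>j<\<rho>. i \<noteq> j \<longrightarrow>
           interior (translate_poly (P i) (p i) (Q i)) \<inter> interior (translate_poly (P j) (p j) (Q j)) = {})}"

definition free_region :: "pt set \<Rightarrow> nat \<Rightarrow> (nat \<Rightarrow> pt set) \<Rightarrow> (nat \<Rightarrow> pt) \<Rightarrow> (nat \<Rightarrow> pt) \<Rightarrow> pt set" where
  "free_region \<Omega> \<rho> P p Q = \<Omega> - (\<Union>i<\<rho>. interior (translate_poly (P i) (p i) (Q i)))"

definition A_hat :: "pt set \<Rightarrow> nat \<Rightarrow> (nat \<Rightarrow> pt set) \<Rightarrow> (nat \<Rightarrow> pt)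
    \<Rightarrow> (nat \<Rightarrow> real) \<Rightarrow> (nat \<Rightarrow> pt \<Rightarrow> pt \<Rightarrow> real) \<Rightarrow> (nat \<Rightarrow> pt) \<Rightarrow> nat \<Rightarrow> pt set" where
  "A_hat \<Omega> \<rho> P p a u Q i = {q \<in> free_region \<Omega> \<rho> P p Q.
      \<forall>j<\<rho>. j \<noteq> i \<longrightarrow> a i + u i q (Q i) < a j + u j q (Q j)}"

definition upper_obj :: "pt set \<Rightarrow> nat \<Rightarrow> (nat \<Rightarrow> pt set) \<Rightarrow> (nat \<Rightarrow> pt)
    \<Rightarrow> (nat \<Rightarrow> real) \<Rightarrow> (nat \<Rightarrow> pt \<Rightarrow> pt \<Rightarrow> real) \<Rightarrow> (pt \<Rightarrow> real) \<Rightarrow> (pt \<Rightarrow> real)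
    \<Rightarrow> (nat \<Rightarrow> real \<Rightarrow> real) \<Rightarrow> (nat \<Rightarrow> real \<Rightarrow> real) \<Rightarrow> (real \<Rightarrow> real)
    \<Rightarrow> (nat \<Rightarrow> pt) \<Rightarrow> real" where
  "upper_obj \<Omega> \<rho> P p a u D B I C L Q =
     (\<Sum>i<\<rho>. I i (LINT q:translate_poly (P i) (p i) (Q i)|lebesgue. B q)
             + C i (LINT q:A_hat \<Omega> \<rho> P p a u Q i|lebesgue. D q))
     + L (LINT q:(\<Union>i<\<rho>. translate_poly (P i) (p i) (Q i))|lebesgue. D q)"

end

theory Submission
  imports Defs
begin


lemma abs_cont:
  fixes f :: "pt \<Rightarrow> real"
  assumes fi: "integrable lebesgue f" and fp: "\<And>x. f x \<ge> 0"
    and A: "\<And>n. A n \<in> lmeasurable" and mA: "(\<lambda>n. measure lebesgue (A n)) \<longlonglongrightarrow> 0"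
  shows "(\<lambda>n. integral\<^sup>L lebesgue (\<lambda>x. f x * indicator (A n) x)) \<longlonglongrightarrow> 0"
proof -
  define g where "g M x = f x - min (f x) (real M)" for M :: nat and x
  have fm: "f \<in> borel_measurable lebesgue" using fi by auto
  have gm: "g M \<in> borel_measurable lebesgue" for M unfolding g_def using fm by measurable
  have gi: "integrable lebesgue (g M)" for M
    by (rule Bochner_Integration.integrable_bound[OF fi gm]) (auto simp: g_def fp)
  have "(\<lambda>M. integral\<^sup>L lebesgue (g M)) \<longlonglongrightarrow> integral\<^sup>L lebesgue (\<lambda>x::pt. 0::real)"
  proof (rule Bochner_Integration.integral_dominated_convergence[OF _ _ fi])
    show "AE x in lebesgue. (\<lambda>M. g M x) \<longlonglongrightarrow> 0"
    proof (rule AE_I2)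
      fix x
      obtain N where N: "f x \<le> real N" using real_arch_simple by blast
      have "eventually (\<lambda>M. g M x = 0) sequentially"
        unfolding eventually_sequentially
        by (rule exI[of _ N]) (use N in \<open>auto simp: g_def\<close>)
      then show "(\<lambda>M. g M x) \<longlonglongrightarrow> 0" by (rule tendsto_eventually)
    qed
    show "AE x in lebesgue. norm (g M x) \<le> f x" for M
      by (rule AE_I2) (auto simp: g_def fp)
  qed (use fi gm in auto)
  then have glim: "(\<lambda>M. integral\<^sup>L lebesgue (g M)) \<longlonglongrightarrow> 0" by simp
  show ?thesis
  proof (rule LIMSEQ_I)
    fix r :: real assume r: "r > 0"
    obtain M where M: "norm (integral\<^sup>L lebesgue (g M) - 0) < r/2"
      using LIMSEQ_D[OF glim, of "r/2"] r by auto
    have "r / (2 * (real M + 1)) > 0" using r by auto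
    then obtain N where N: "\<forall>n\<ge>N. norm (measure lebesgue (A n) - 0) < r / (2 * (real M + 1))"
      using LIMSEQ_D[OF mA] by blast
    have "norm (integral\<^sup>L lebesgue (\<lambda>x. f x * indicator (A n) x) - 0) < r" if n: "n \<ge> N" for n
    proof -
      have Ai: "integrable lebesgue (indicator (A n) :: pt \<Rightarrow> real)"
        using A lmeasurable_iff_integrable by blast
      have Am: "A n \<in> sets lebesgue" using A fmeasurableD by blast
      have i1: "integrable lebesgue (\<lambda>x. f x * indicator (A n) x)"
        by (rule integrable_real_mult_indicator[OF Am fi])
      have "integral\<^sup>L lebesgue (\<lambda>x. f x * indicator (A n) x)
          \<le> integral\<^sup>L lebesgue (\<lambda>x. g M x + real M * indicator (A n) x)"
      proof (rule integral_mono[OF i1])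
        show "integrable lebesgue (\<lambda>x. g M x + real M * indicator (A n) x)"
          using gi[of M] Ai by (intro Bochner_Integration.integrable_add Bochner_Integration.integrable_mult_right)
      qed (auto simp: g_def fp indicator_def)
      also have "\<dots> = integral\<^sup>L lebesgue (g M) + real M * measure lebesgue (A n)"
        using gi Ai by (simp add: integral_indicator)
      also have "\<dots> < r/2 + real M * (r / (2 * (real M + 1)))"
      proof -
        have mn: "measure lebesgue (A n) < r / (2 * (real M + 1))" using N n by auto
        have "real M * measure lebesgue (A n) \<le> real M * (r / (2 * (real M + 1)))"
          using mn by (intro mult_left_mono) auto
        then show ?thesis using M by auto
      qed
      also have "\<dots> \<le> r/2 + r/2"
      proof -
        have "real M * (r / (2 * (real M + 1))) = (r/2) * (real M / (real M + 1))" by (simp add: field_simps)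
        also have "\<dots> \<le> (r/2) * 1" using r by (intro mult_left_mono) auto
        finally have "real M * (r / (2 * (real M + 1))) \<le> r/2" by simp
        then show ?thesis by linarith
      qed
      finally have up: "integral\<^sup>L lebesgue (\<lambda>x. f x * indicator (A n) x) < r" by simp
      have "0 \<le> integral\<^sup>L lebesgue (\<lambda>x. f x * indicator (A n) x)"
        by (rule integral_nonneg_AE) (auto simp: fp indicator_def)
      with up show ?thesis by simp
    qed
    then show "\<exists>no. \<forall>n\<ge>no. norm (integral\<^sup>L lebesgue (\<lambda>x. f x * indicator (A n) x) - 0) < r" by blast
  qed
qed




lemma transl_meas:
  fixes T :: "pt set" and h :: "nat \<Rightarrow> pt"
  assumes T: "T \<in> lmeasurable" "bounded T" and h: "h \<longlonglongrightarrow> 0"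
  shows "(\<lambda>n. measure lebesgue (((+) (h n) ` T - T) \<union> (T - (+) (h n) ` T))) \<longlonglongrightarrow> 0"
proof (rule LIMSEQ_I)
  fix r :: real assume r: "r > 0"
  define e where "e = r / 5"
  have e: "e > 0" using r by (simp add: e_def)
  have Ts: "T \<in> sets lebesgue" using T fmeasurableD by blast
  obtain K where K: "closed K" "K \<subseteq> T" "T - K \<in> lmeasurable" "emeasure lebesgue (T - K) < ennreal e"
    using sets_lebesgue_inner_closed[OF Ts e] by blast
  obtain G where G: "open G" "T \<subseteq> G" "G - T \<in> lmeasurable" "emeasure lebesgue (G - T) < ennreal e"
    using sets_lebesgue_outer_open[OF Ts e] by blast
  have mK: "measure lebesgue (T - K) < e"
    using K(3,4) e by (simp add: emeasure_eq_measure2 ennreal_less_iff)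
  have mG: "measure lebesgue (G - T) < e"
    using G(3,4) e by (simp add: emeasure_eq_measure2 ennreal_less_iff)
  have Kc: "compact K" using K T by (meson bounded_subset compact_eq_bounded_closed)
  obtain d where d: "d > 0" "(\<Union>x\<in>K. ball x d) \<subseteq> G"
    using compact_subset_open_imp_ball_epsilon_subset[OF Kc G(1)] K(2) G(2) by blast
  obtain N where N: "\<forall>n\<ge>N. norm (h n - 0) < d" using LIMSEQ_D[OF h d(1)] by blast
  have "norm (measure lebesgue (((+) (h n) ` T - T) \<union> (T - (+) (h n) ` T)) - 0) < r" if n: "n \<ge> N" for n
  proof -
    let ?h = "h n"
    have hn: "norm ?h < d" using N n by auto
    define U where "U = ((T - K) \<union> ((+) ?h ` (T - K))) \<union> ((G - T) \<union> ((+) ?h ` (G - T)))"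
    have sub: "((+) ?h ` T - T) \<union> (T - (+) ?h ` T) \<subseteq> U"
    proof
      fix x assume x: "x \<in> ((+) ?h ` T - T) \<union> (T - (+) ?h ` T)"
      show "x \<in> U"
      proof (cases "x \<in> (+) ?h ` T - T")
        case True
        then obtain y where y: "y \<in> T" "x = ?h + y" "x \<notin> T" by auto
        show ?thesis
        proof (cases "y \<in> K")
          case True
          have "dist y x < d" using y hn by (simp add: dist_norm)
          then have "x \<in> G" using d(2) True by (auto simp: subset_iff)
          then show ?thesis using y unfolding U_def by auto
        next
          case False
          then show ?thesis using y unfolding U_def by auto
        qed
      next
        case False
        then have x2: "x \<in> T" "x - ?h \<notin> T" using x by (auto simp: image_iff)
        show ?thesis
        proof (cases "x \<in> K")
          case True
          have "x - ?h \<in> ball x d" using hn by (simp add: dist_norm)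
          then have "x - ?h \<in> G" using d(2) True by (meson UN_I subsetD)
          then have "x \<in> (+) ?h ` (G - T)" using x2 by (auto simp: image_iff intro!: bexI[of _ "x - ?h"])
          then show ?thesis unfolding U_def by auto
        next
          case False
          then show ?thesis using x2 unfolding U_def by auto
        qed
      qed
    qed
    have l1: "T - K \<in> lmeasurable" "(+) ?h ` (T - K) \<in> lmeasurable" "G - T \<in> lmeasurable" "(+) ?h ` (G - T) \<in> lmeasurable"
      using K(3) G(3) measurable_translation by auto
    have Ul: "U \<in> lmeasurable" unfolding U_def using l1 by auto
    have Dl: "((+) ?h ` T - T) \<union> (T - (+) ?h ` T) \<in> sets lebesgue"
      using Ts measurable_translation[OF T(1), of ?h] by auto
    have "measure lebesgue (((+) ?h ` T - T) \<union> (T - (+) ?h ` T)) \<le> measure lebesgue U"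
      by (rule measure_mono_fmeasurable[OF sub Dl Ul])
    also have "\<dots> \<le> (measure lebesgue (T - K) + measure lebesgue ((+) ?h ` (T - K)))
                    + (measure lebesgue (G - T) + measure lebesgue ((+) ?h ` (G - T)))"
      unfolding U_def using l1
      by (meson add_mono fmeasurableD order_trans measure_Un_le sets.Un)
    also have "\<dots> = 2 * measure lebesgue (T - K) + 2 * measure lebesgue (G - T)"
      by (simp add: measure_translation)
    also have "\<dots> < r" using mK mG e_def r by linarith
    finally show ?thesis by simp
  qed
  then show "\<exists>no. \<forall>n\<ge>no. norm (measure lebesgue (((+) (h n) ` T - T) \<union> (T - (+) (h n) ` T)) - 0) < r"
    by blast
qed




definition dconv :: "(pt \<Rightarrow> real) \<Rightarrow> (nat \<Rightarrow> pt set) \<Rightarrow> pt set \<Rightarrow> bool" where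
 "dconv f E E0 \<longleftrightarrow> (\<forall>n. E n \<in> sets lebesgue) \<and> E0 \<in> sets lebesgue \<and>
   (\<lambda>n. integral\<^sup>L lebesgue (\<lambda>x. f x * indicator ((E n - E0) \<union> (E0 - E n)) x)) \<longlonglongrightarrow> 0"

lemma int_ind_nonneg:
  assumes fp: "\<And>x. f x \<ge> 0"
  shows "0 \<le> integral\<^sup>L lebesgue (\<lambda>x. (f x::real) * indicator S x)"
  by (rule integral_nonneg_AE) (auto simp: fp indicator_def)

lemma int_ind_bound:
  fixes f :: "pt \<Rightarrow> real"
  assumes fi: "integrable lebesgue f" and fp: "\<And>x. f x \<ge> 0"
    and S: "S \<in> sets lebesgue" "S1 \<in> sets lebesgue" "S2 \<in> sets lebesgue" and sub: "S \<subseteq> S1 \<union> S2"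
  shows "integral\<^sup>L lebesgue (\<lambda>x. f x * indicator S x)
    \<le> integral\<^sup>L lebesgue (\<lambda>x. f x * indicator S1 x) + integral\<^sup>L lebesgue (\<lambda>x. f x * indicator S2 x)"
proof -
  have i: "integrable lebesgue (\<lambda>x. f x * indicator A x)" if "A \<in> sets lebesgue" for A
    using integrable_real_mult_indicator[OF that fi] .
  have "integral\<^sup>L lebesgue (\<lambda>x. f x * indicator S x)
    \<le> integral\<^sup>L lebesgue (\<lambda>x. f x * indicator S1 x + f x * indicator S2 x)"
  proof (rule integral_mono)
    show "integrable lebesgue (\<lambda>x. f x * indicator S1 x + f x * indicator S2 x)"
      using i[OF S(2)] i[OF S(3)] by (rule Bochner_Integration.integrable_add)
    fix x show "f x * indicator S x \<le> f x * indicator S1 x + f x * indicator S2 x"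
      using sub fp[of x] by (auto simp: indicator_def)
  qed (rule i[OF S(1)])
  also have "\<dots> = integral\<^sup>L lebesgue (\<lambda>x. f x * indicator S1 x) + integral\<^sup>L lebesgue (\<lambda>x. f x * indicator S2 x)"
    using i[OF S(2)] i[OF S(3)] by (rule Bochner_Integration.integral_add)
  finally show ?thesis .
qed

lemma squeeze0:
  fixes a b c :: "nat \<Rightarrow> real"
  assumes "\<And>n. 0 \<le> a n" "\<And>n. a n \<le> b n + c n" "b \<longlonglongrightarrow> 0" "c \<longlonglongrightarrow> 0"
  shows "a \<longlonglongrightarrow> 0"
proof (rule tendsto_sandwich[of "\<lambda>_. 0" a sequentially "\<lambda>n. b n + c n"])
  show "(\<lambda>n. b n + c n) \<longlonglongrightarrow> 0" using tendsto_add[OF assms(3,4)] by simp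
qed (use assms in auto)

lemma dconv_combine:
  fixes f :: "pt \<Rightarrow> real"
  assumes fi: "integrable lebesgue f" and fp: "\<And>x. f x \<ge> 0"
    and E: "dconv f E E0" and G: "dconv f G G0"
    and H: "\<And>n. H n \<in> sets lebesgue" "H0 \<in> sets lebesgue"
    and sub: "\<And>n. (H n - H0) \<union> (H0 - H n) \<subseteq> ((E n - E0) \<union> (E0 - E n)) \<union> ((G n - G0) \<union> (G0 - G n))"
  shows "dconv f H H0"
  unfolding dconv_def
proof (intro conjI allI H)
  show "(\<lambda>n. integral\<^sup>L lebesgue (\<lambda>x. f x * indicator ((H n - H0) \<union> (H0 - H n)) x)) \<longlonglongrightarrow> 0"
  proof (rule squeeze0)
    show "(\<lambda>n. integral\<^sup>L lebesgue (\<lambda>x. f x * indicator ((E n - E0) \<union> (E0 - E n)) x)) \<longlonglongrightarrow> 0"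
      using E unfolding dconv_def by blast
    show "(\<lambda>n. integral\<^sup>L lebesgue (\<lambda>x. f x * indicator ((G n - G0) \<union> (G0 - G n)) x)) \<longlonglongrightarrow> 0"
      using G unfolding dconv_def by blast
    fix n
    show "0 \<le> integral\<^sup>L lebesgue (\<lambda>x. f x * indicator ((H n - H0) \<union> (H0 - H n)) x)"
      by (rule int_ind_nonneg[OF fp])
    show "integral\<^sup>L lebesgue (\<lambda>x. f x * indicator ((H n - H0) \<union> (H0 - H n)) x)
       \<le> integral\<^sup>L lebesgue (\<lambda>x. f x * indicator ((E n - E0) \<union> (E0 - E n)) x) +
         integral\<^sup>L lebesgue (\<lambda>x. f x * indicator ((G n - G0) \<union> (G0 - G n)) x)"
      using E G H by (intro int_ind_bound[OF fi fp _ _ _ sub]) (auto simp: dconv_def)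
  qed
qed

lemma dconv_const: "E \<in> sets lebesgue \<Longrightarrow> dconv f (\<lambda>n. E) E"
  unfolding dconv_def by simp

lemma dconv_Int:
  assumes "integrable lebesgue f" "\<And>x. f x \<ge> 0" "dconv f E E0" "dconv f G G0"
  shows "dconv f (\<lambda>n. E n \<inter> G n) (E0 \<inter> G0)"
  by (rule dconv_combine[OF assms]) (use assms(3,4) in \<open>auto simp: dconv_def\<close>)

lemma dconv_Un:
  assumes "integrable lebesgue f" "\<And>x. f x \<ge> 0" "dconv f E E0" "dconv f G G0"
  shows "dconv f (\<lambda>n. E n \<union> G n) (E0 \<union> G0)"
  by (rule dconv_combine[OF assms]) (use assms(3,4) in \<open>auto simp: dconv_def\<close>)

lemma dconv_Diff:
  assumes "integrable lebesgue f" "\<And>x. f x \<ge> 0" "dconv f E E0" "dconv f G G0"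
  shows "dconv f (\<lambda>n. E n - G n) (E0 - G0)"
  by (rule dconv_combine[OF assms]) (use assms(3,4) in \<open>auto simp: dconv_def\<close>)

lemma dconv_UN:
  assumes fi: "integrable lebesgue f" and fp: "\<And>x. f x \<ge> 0" and I: "finite I"
    and E: "\<And>i. i \<in> I \<Longrightarrow> dconv f (\<lambda>n. E n i) (E0 i)"
  shows "dconv f (\<lambda>n. \<Union>i\<in>I. E n i) (\<Union>i\<in>I. E0 i)"
  using I E
proof (induction I rule: finite_induct)
  case empty
  then show ?case by (simp add: dconv_const)
next
  case (insert j I)
  have "dconv f (\<lambda>n. E n j \<union> (\<Union>i\<in>I. E n i)) (E0 j \<union> (\<Union>i\<in>I. E0 i))"
    using insert by (intro dconv_Un[OF fi fp]) auto
  then show ?case by simp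
qed

lemma dconv_integral:
  fixes f :: "pt \<Rightarrow> real"
  assumes fi: "integrable lebesgue f" and fp: "\<And>x. f x \<ge> 0" and E: "dconv f E E0"
  shows "(\<lambda>n. integral\<^sup>L lebesgue (\<lambda>x. f x * indicator (E n) x)) \<longlonglongrightarrow> integral\<^sup>L lebesgue (\<lambda>x. f x * indicator E0 x)"
proof -
  have Em: "E n \<in> sets lebesgue" "E0 \<in> sets lebesgue" for n using E by (auto simp: dconv_def)
  have i: "integrable lebesgue (\<lambda>x. f x * indicator A x)" if "A \<in> sets lebesgue" for A
    using integrable_real_mult_indicator[OF that fi] .
  let ?d = "\<lambda>n. integral\<^sup>L lebesgue (\<lambda>x. f x * indicator ((E n - E0) \<union> (E0 - E n)) x)"
  have d: "?d \<longlonglongrightarrow> 0" using E by (simp add: dconv_def)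
  have "(\<lambda>n. integral\<^sup>L lebesgue (\<lambda>x. f x * indicator (E n) x) - integral\<^sup>L lebesgue (\<lambda>x. f x * indicator E0 x)) \<longlonglongrightarrow> 0"
  proof (rule tendsto_norm_zero_cancel, rule squeeze0[where c="\<lambda>_. 0"])
    fix n
    have "integral\<^sup>L lebesgue (\<lambda>x. f x * indicator (E n) x) - integral\<^sup>L lebesgue (\<lambda>x. f x * indicator E0 x)
        = integral\<^sup>L lebesgue (\<lambda>x. f x * indicator (E n) x - f x * indicator E0 x)"
      using i[OF Em(1)] i[OF Em(2)] by (rule Bochner_Integration.integral_diff[symmetric])
    also have "norm \<dots> \<le> integral\<^sup>L lebesgue (\<lambda>x. norm (f x * indicator (E n) x - f x * indicator E0 x))"
      by (rule integral_norm_bound)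
    also have "\<dots> = ?d n"
      by (rule Bochner_Integration.integral_cong) (auto simp: indicator_def fp)
    finally show "norm (integral\<^sup>L lebesgue (\<lambda>x. f x * indicator (E n) x) - integral\<^sup>L lebesgue (\<lambda>x. f x * indicator E0 x)) \<le> ?d n + 0"
      by simp
  qed (use d in auto)
  then show ?thesis by (simp add: LIM_zero_iff)
qed

lemma dconv_transl:
  fixes f :: "pt \<Rightarrow> real"
  assumes fi: "integrable lebesgue f" and fp: "\<And>x. f x \<ge> 0"
    and T: "T \<in> lmeasurable" "bounded T" and v: "v \<longlonglongrightarrow> v0"
  shows "dconv f (\<lambda>n. (+) (v n) ` T) ((+) v0 ` T)"
proof -
  define h where "h n = v n - v0" for n
  have h: "h \<longlonglongrightarrow> 0" unfolding h_def using v by (simp add: LIM_zero)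
  define A where "A n = ((+) (v n) ` T - (+) v0 ` T) \<union> ((+) v0 ` T - (+) (v n) ` T)" for n
  have Aeq: "A n = (+) v0 ` (((+) (h n) ` T - T) \<union> (T - (+) (h n) ` T))" for n
  proof -
    have e1: "(+) v0 ` ((+) (h n) ` T) = (+) (v n) ` T"
      unfolding image_image h_def by (simp add: algebra_simps)
    have inj: "inj ((+) v0)" by (simp add: inj_def)
    show ?thesis unfolding A_def image_Un image_set_diff[OF inj] e1 ..
  qed
  have Al: "A n \<in> lmeasurable" for n
    unfolding A_def using measurable_translation[OF T(1)] by auto
  have mA: "(\<lambda>n. measure lebesgue (A n)) \<longlonglongrightarrow> 0"
    unfolding Aeq measure_translation by (rule transl_meas[OF T h])
  show ?thesis
    unfolding dconv_def
    using abs_cont[OF fi fp Al mA] measurable_translation[OF T(1)]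
    by (auto simp: A_def)
qed

lemma dconv_Int_ae:
  fixes f :: "pt \<Rightarrow> real"
  assumes fi: "integrable lebesgue f" and fp: "\<And>x. f x \<ge> 0" and F: "dconv f F F0"
    and S: "\<And>n. S n \<in> sets lebesgue" "S0 \<in> sets lebesgue"
    and ae: "AE x in lebesgue. x \<in> F0 \<and> f x \<noteq> 0 \<longrightarrow> eventually (\<lambda>n. x \<in> S n \<longleftrightarrow> x \<in> S0) sequentially"
  shows "dconv f (\<lambda>n. F n \<inter> S n) (F0 \<inter> S0)"
proof -
  have Fm: "F n \<in> sets lebesgue" "F0 \<in> sets lebesgue" for n using F by (auto simp: dconv_def)
  define G where "G n = F0 \<inter> ((S n - S0) \<union> (S0 - S n))" for n
  have Gm: "G n \<in> sets lebesgue" for n unfolding G_def using Fm S by auto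
  have fm: "f \<in> borel_measurable lebesgue" using fi by auto
  have "(\<lambda>n. integral\<^sup>L lebesgue (\<lambda>x. f x * indicator (G n) x)) \<longlonglongrightarrow> integral\<^sup>L lebesgue (\<lambda>x::pt. 0::real)"
  proof (rule Bochner_Integration.integral_dominated_convergence[OF _ _ fi])
    show "(\<lambda>x. f x * indicator (G n) x) \<in> borel_measurable lebesgue" for n
      using Gm fm by measurable
    show "AE x in lebesgue. norm (f x * indicator (G n) x) \<le> f x" for n
      by (rule AE_I2) (auto simp: fp indicator_def)
    show "AE x in lebesgue. (\<lambda>n. f x * indicator (G n) x) \<longlonglongrightarrow> 0"
      using ae
    proof eventually_elim
      case (elim x)
      show ?case
      proof (cases "x \<in> F0 \<and> f x \<noteq> 0")
        case True
        with elim have "eventually (\<lambda>n. f x * indicator (G n) x = 0) sequentially"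
          by (auto elim!: eventually_mono simp: G_def)
        then show ?thesis by (rule tendsto_eventually)
      next
        case False
        then have z: "(\<lambda>n. f x * indicator (G n) x) = (\<lambda>n. 0)" by (auto simp: G_def fun_eq_iff)
        show ?thesis unfolding z by simp
      qed
    qed
  qed simp
  then have "dconv f G {}" unfolding dconv_def using Gm by simp
  then show ?thesis
    by (rule dconv_combine[OF fi fp F _ _ _ ]) (use Fm S in \<open>auto simp: G_def\<close>)
qed




lemma translate_poly_eq: "translate_poly P p q = (+) (q - p) ` P"
  unfolding translate_poly_def by (simp add: add.commute)

lemma interior_translate_poly: "interior (translate_poly P p q) = (+) (q - p) ` interior P"
  unfolding translate_poly_eq by (rule interior_translation)

lemma cont_sec:
  fixes g :: "pt \<Rightarrow> pt \<Rightarrow> real"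
  assumes "continuous_on UNIV (\<lambda>(x, y). g x y)"
  shows "continuous_on UNIV (\<lambda>x. g x y)"
proof -
  have "continuous_on UNIV ((\<lambda>(x, y). g x y) \<circ> (\<lambda>x. (x, y)))"
    by (rule continuous_on_compose[OF _ continuous_on_subset[OF assms]]) (auto intro!: continuous_intros)
  then show ?thesis by (simp add: o_def)
qed

lemma tendsto_sec:
  fixes g :: "pt \<Rightarrow> pt \<Rightarrow> real"
  assumes "continuous_on UNIV (\<lambda>(x, y). g x y)" and z: "z \<longlonglongrightarrow> z0"
  shows "(\<lambda>n. g x (z n)) \<longlonglongrightarrow> g x z0"
proof -
  have "(\<lambda>n. (\<lambda>(x, y). g x y) (x, z n)) \<longlonglongrightarrow> (\<lambda>(x, y). g x y) (x, z0)"
    by (rule continuous_on_tendsto_compose[OF assms(1)]) (auto intro!: tendsto_intros z)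
  then show ?thesis by simp
qed

lemma seq_extract:
  fixes X :: "nat \<Rightarrow> nat \<Rightarrow> pt"
  assumes K: "compact K" and X: "\<forall>n. \<forall>i<k. X n i \<in> K"
  shows "\<exists>r l. strict_mono r \<and> (\<forall>i<k. l i \<in> K \<and> (\<lambda>n. X (r n) i) \<longlonglongrightarrow> l i)"
  using X
proof (induction k)
  case 0
  show ?case by (rule exI[of _ id]) (auto simp: strict_mono_def)
next
  case (Suc k)
  then obtain r l where r: "strict_mono r" and l: "\<forall>i<k. l i \<in> K \<and> (\<lambda>n. X (r n) i) \<longlonglongrightarrow> l i"
    by auto
  have "\<forall>n. X (r n) k \<in> K" using Suc.prems by auto
  then obtain l2 r2 where l2: "l2 \<in> K" "strict_mono r2" "((\<lambda>n. X (r n) k) \<circ> r2) \<longlonglongrightarrow> l2"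
    using seq_compactE[OF compact_imp_seq_compact[OF K]] by metis
  show ?case
  proof (intro exI conjI allI impI)
    show "strict_mono (r \<circ> r2)" using r l2(2) by (rule strict_mono_o)
    fix i assume i: "i < Suc k"
    show "(l(k := l2)) i \<in> K" using l l2 i by auto
    show "(\<lambda>n. X ((r \<circ> r2) n) i) \<longlonglongrightarrow> (l(k := l2)) i"
    proof (cases "i = k")
      case True
      then show ?thesis using l2(3) by (simp add: o_def)
    next
      case False
      then have "i < k" using i by auto
      then have "(\<lambda>n. X (r n) i) \<longlonglongrightarrow> l i" using l by auto
      from LIMSEQ_subseq_LIMSEQ[OF this l2(2)] show ?thesis using False by (simp add: o_def)
    qed
  qed
qed

locale setting =
  fixes \<Omega> :: "pt set" and D B :: "pt \<Rightarrow> real" and \<rho> :: nat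
    and P :: "nat \<Rightarrow> pt set" and p :: "nat \<Rightarrow> pt"
    and u :: "nat \<Rightarrow> pt \<Rightarrow> pt \<Rightarrow> real" and a :: "nat \<Rightarrow> real"
    and I C :: "nat \<Rightarrow> real \<Rightarrow> real" and L :: "real \<Rightarrow> real"
  assumes \<Omega>_compact: "compact \<Omega>"
    and D_nonneg: "\<forall>q\<in>\<Omega>. D q \<ge> 0"
    and D_total: "(LINT q:\<Omega>|lebesgue. D q) = 1"
    and B_nonneg: "\<forall>q\<in>\<Omega>. B q \<ge> 0"
    and B_fin: "set_integrable lebesgue \<Omega> B"
    and P_compact: "\<forall>i<\<rho>. compact (P i)"
    and p_in: "\<forall>i<\<rho>. p i \<in> P i"
    and u_cont: "\<forall>i<\<rho>. continuous_on UNIV (\<lambda>(x, y). u i x y)"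
    and ties_negl: "\<forall>Q\<in>Gamma \<Omega> \<rho> P p. \<forall>i<\<rho>. \<forall>j<\<rho>. i \<noteq> j \<longrightarrow>
        D_negligible D {q \<in> free_region \<Omega> \<rho> P p Q. a i + u i q (Q i) = a j + u j q (Q j)}"
    and I_props: "\<forall>i<\<rho>. (\<forall>x. I i x \<ge> 0) \<and> mono (I i) \<and> continuous_on UNIV (I i)"
    and C_props: "\<forall>i<\<rho>. (\<forall>x\<in>{0..1}. C i x \<ge> 0) \<and> mono_on {0..1} (C i) \<and> continuous_on {0..1} (C i)"
    and L_props: "(\<forall>x\<in>{0..1}. L x \<ge> 0) \<and> mono_on {0..1} L \<and> continuous_on {0..1} L"
begin

definition "fD x = indicator \<Omega> x * D x"
definition "fB x = indicator \<Omega> x * B x"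
definition "S Q i = {q. \<forall>j<\<rho>. j \<noteq> i \<longrightarrow> a i + u i q (Q i) < a j + u j q (Q j)}"

lemma \<Omega>_sets: "\<Omega> \<in> sets lebesgue"
  using \<Omega>_compact by (simp add: compact_imp_closed borel_closed)

lemma fD_nonneg: "fD x \<ge> 0" using D_nonneg by (auto simp: fD_def indicator_def)
lemma fB_nonneg: "fB x \<ge> 0" using B_nonneg by (auto simp: fB_def indicator_def)

lemma fD_int: "integrable lebesgue fD"
proof (rule ccontr)
  assume "\<not> integrable lebesgue fD"
  then have "integral\<^sup>L lebesgue fD = 0" by (rule not_integrable_integral_eq)
  moreover have "integral\<^sup>L lebesgue fD = 1"
    using D_total unfolding set_lebesgue_integral_def fD_def by simp
  ultimately show False by simp
qed

lemma fB_int: "integrable lebesgue fB"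
  using B_fin unfolding set_integrable_def fB_def by simp

lemma lint_eq:
  fixes g :: "pt \<Rightarrow> real"
  assumes "E \<subseteq> \<Omega>"
  shows "(LINT q:E|lebesgue. g q) = integral\<^sup>L lebesgue (\<lambda>x. (indicator \<Omega> x * g x) * indicator E x)"
  unfolding set_lebesgue_integral_def
  by (rule Bochner_Integration.integral_cong) (use assms in \<open>auto simp: indicator_def\<close>)

lemma mass01:
  assumes "E \<subseteq> \<Omega>" "E \<in> sets lebesgue"
  shows "(LINT q:E|lebesgue. D q) \<in> {0..1}"
proof -
  have "(LINT q:E|lebesgue. D q) = integral\<^sup>L lebesgue (\<lambda>x. fD x * indicator E x)"
    using lint_eq[OF assms(1)] by (simp add: fD_def)
  moreover have "0 \<le> integral\<^sup>L lebesgue (\<lambda>x. fD x * indicator E x)"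
    by (rule int_ind_nonneg[OF fD_nonneg])
  moreover have "integral\<^sup>L lebesgue (\<lambda>x. fD x * indicator E x) \<le> integral\<^sup>L lebesgue fD"
    by (rule integral_mono[OF integrable_real_mult_indicator[OF assms(2) fD_int] fD_int])
       (auto simp: indicator_def fD_nonneg)
  moreover have "integral\<^sup>L lebesgue fD = 1"
    using D_total unfolding set_lebesgue_integral_def fD_def by simp
  ultimately show ?thesis by auto
qed

lemma free_region_closed: "closed (free_region \<Omega> \<rho> P p Q)"
  unfolding free_region_def using \<Omega>_compact
  by (intro closed_Diff) (auto simp: compact_imp_closed)

lemma free_region_sub: "free_region \<Omega> \<rho> P p Q \<subseteq> \<Omega>"
  unfolding free_region_def by auto

lemma S_open: "i < \<rho> \<Longrightarrow> open (S Q i)"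
proof -
  assume i: "i < \<rho>"
  have eq: "S Q i = (\<Inter>j\<in>{..<\<rho>}. {q. j \<noteq> i \<longrightarrow> a i + u i q (Q i) < a j + u j q (Q j)})"
    unfolding S_def by auto
  have "open {q. j \<noteq> i \<longrightarrow> a i + u i q (Q i) < a j + u j q (Q j)}" if j: "j < \<rho>" for j
  proof (cases "j = i")
    case True then show ?thesis by simp
  next
    case False
    then have "{q. j \<noteq> i \<longrightarrow> a i + u i q (Q i) < a j + u j q (Q j)} = {q. a i + u i q (Q i) < a j + u j q (Q j)}"
      by auto
    also have "open \<dots>"
    proof -
      have "continuous_on UNIV (\<lambda>q. u k q (Q k))" if "k < \<rho>" for k
        using cont_sec u_cont that by blast
      then show ?thesis using i j by (intro open_Collect_less continuous_on_add continuous_on_const) auto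
    qed
    finally show ?thesis .
  qed
  then show ?thesis unfolding eq by (intro open_INT) auto
qed

lemma A_hat_eq: "A_hat \<Omega> \<rho> P p a u Q i = free_region \<Omega> \<rho> P p Q \<inter> S Q i"
  unfolding A_hat_def S_def by auto

lemma A_hat_sets: "i < \<rho> \<Longrightarrow> A_hat \<Omega> \<rho> P p a u Q i \<in> sets lebesgue"
  unfolding A_hat_eq using free_region_closed S_open
  by (intro sets.Int) (auto simp: borel_closed borel_open)

lemma A_hat_sub: "A_hat \<Omega> \<rho> P p a u Q i \<subseteq> \<Omega>"
  unfolding A_hat_eq using free_region_sub by auto

lemma poly_compact: "i < \<rho> \<Longrightarrow> compact (translate_poly (P i) (p i) q)"
  unfolding translate_poly_eq using P_compact by (simp add: compact_translation)

lemma Gamma_sub: "Q \<in> Gamma \<Omega> \<rho> P p \<Longrightarrow> i < \<rho> \<Longrightarrow> translate_poly (P i) (p i) (Q i) \<subseteq> \<Omega>"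
  unfolding Gamma_def feas_root_def by auto

lemma union_sets: "(\<Union>i<\<rho>. translate_poly (P i) (p i) (Q i)) \<in> sets lebesgue"
  using poly_compact by (intro sets.finite_UN) (auto simp: compact_imp_closed borel_closed)

lemma union_sub: "Q \<in> Gamma \<Omega> \<rho> P p \<Longrightarrow> (\<Union>i<\<rho>. translate_poly (P i) (p i) (Q i)) \<subseteq> \<Omega>"
  using Gamma_sub by auto

lemma obj_nonneg:
  assumes Q: "Q \<in> Gamma \<Omega> \<rho> P p"
  shows "upper_obj \<Omega> \<rho> P p a u D B I C L Q \<ge> 0"
  unfolding upper_obj_def
proof (intro add_nonneg_nonneg sum_nonneg ballI)
  show "0 \<le> L (LINT q:(\<Union>i<\<rho>. translate_poly (P i) (p i) (Q i))|lebesgue. D q)"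
    using L_props mass01[OF union_sub[OF Q] union_sets] by auto
  fix i assume "i \<in> {..<\<rho>}"
  then have i: "i < \<rho>" by simp
  show "0 \<le> I i (LINT q:translate_poly (P i) (p i) (Q i)|lebesgue. B q)"
    using I_props i by auto
  show "0 \<le> C i (LINT q:A_hat \<Omega> \<rho> P p a u Q i|lebesgue. D q)"
    using C_props i mass01[OF A_hat_sub A_hat_sets[OF i]] by auto
qed

end



context setting
begin

lemma ae_S:
  assumes Q0: "Q0 \<in> Gamma \<Omega> \<rho> P p" and i: "i < \<rho>"
    and lim: "\<And>k. k < \<rho> \<Longrightarrow> (\<lambda>n. Qs n k) \<longlonglongrightarrow> Q0 k"
  shows "AE x in lebesgue. x \<in> free_region \<Omega> \<rho> P p Q0 \<and> fD x \<noteq> 0 \<longrightarrow>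
           eventually (\<lambda>n. x \<in> S (Qs n) i \<longleftrightarrow> x \<in> S Q0 i) sequentially"
proof -
  define tie where "tie j = {q \<in> free_region \<Omega> \<rho> P p Q0. a i + u i q (Q0 i) = a j + u j q (Q0 j)}" for j
  have tie_ae: "AE x in lebesgue. x \<in> tie j \<longrightarrow> fD x = 0" if j: "j < \<rho>" "j \<noteq> i" for j
  proof -
    have sub: "tie j \<subseteq> \<Omega>" unfolding tie_def using free_region_sub by auto
    have "closed {q. a i + u i q (Q0 i) = a j + u j q (Q0 j)}"
    proof -
      have "continuous_on UNIV (\<lambda>q. u k q (Q0 k))" if "k < \<rho>" for k
        using cont_sec u_cont that by blast
      then show ?thesis using i j by (intro closed_Collect_eq continuous_on_add continuous_on_const) auto
    qed
    moreover have "tie j = free_region \<Omega> \<rho> P p Q0 \<inter> {q. a i + u i q (Q0 i) = a j + u j q (Q0 j)}"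
      unfolding tie_def by blast
    ultimately have "closed (tie j)"
      using free_region_closed by (metis closed_Int)
    then have tm: "tie j \<in> sets lebesgue" by (simp add: borel_closed)
    have "(LINT q:tie j|lebesgue. D q) = 0"
      using ties_negl Q0 i j unfolding D_negligible_def tie_def by auto
    then have z: "integral\<^sup>L lebesgue (\<lambda>x. fD x * indicator (tie j) x) = 0"
      using lint_eq[OF sub, of D] by (simp add: fD_def)
    have "AE x in lebesgue. fD x * indicator (tie j) x = 0"
      using integral_nonneg_eq_0_iff_AE[OF integrable_real_mult_indicator[OF tm fD_int]] z
      by (simp add: fD_nonneg)
    then show ?thesis by (rule eventually_mono) (auto simp: indicator_def)
  qed
  have "AE x in lebesgue. \<forall>j\<in>{j. j < \<rho> \<and> j \<noteq> i}. x \<in> tie j \<longrightarrow> fD x = 0"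
    by (rule eventually_ball_finite) (use tie_ae in auto)
  then show ?thesis
  proof (rule eventually_mono, intro impI)
    fix x assume H: "\<forall>j\<in>{j. j < \<rho> \<and> j \<noteq> i}. x \<in> tie j \<longrightarrow> fD x = 0"
      and x: "x \<in> free_region \<Omega> \<rho> P p Q0 \<and> fD x \<noteq> 0"
    have ne: "a i + u i x (Q0 i) \<noteq> a j + u j x (Q0 j)" if "j < \<rho>" "j \<noteq> i" for j
      using H x that unfolding tie_def by auto
    define d where "d j n = (a j + u j x (Qs n j)) - (a i + u i x (Qs n i))" for j n
    define d0 where "d0 j = (a j + u j x (Q0 j)) - (a i + u i x (Q0 i))" for j
    have dlim: "(\<lambda>n. d j n) \<longlonglongrightarrow> d0 j" if j: "j < \<rho>" for j
    proof -
      have uk: "(\<lambda>n. u k x (Qs n k)) \<longlonglongrightarrow> u k x (Q0 k)" if "k < \<rho>" for k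
        using tendsto_sec[OF _ lim[OF that]] u_cont that by auto
      have "(\<lambda>n. (a j + u j x (Qs n j)) - (a i + u i x (Qs n i))) \<longlonglongrightarrow> (a j + u j x (Q0 j)) - (a i + u i x (Q0 i))"
        using uk[OF j] uk[OF i] by (intro tendsto_diff tendsto_add tendsto_const)
      then show ?thesis by (simp add: d_def d0_def)
    qed
    show "eventually (\<lambda>n. x \<in> S (Qs n) i \<longleftrightarrow> x \<in> S Q0 i) sequentially"
    proof (cases "x \<in> S Q0 i")
      case True
      then have pos: "d0 j > 0" if "j < \<rho>" "j \<noteq> i" for j
        using that unfolding S_def d0_def by auto
      have "eventually (\<lambda>n. \<forall>j\<in>{j. j < \<rho> \<and> j \<noteq> i}. d j n > 0) sequentially"
        by (rule eventually_ball_finite) (use order_tendstoD(1)[OF dlim pos] in auto)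
      then show ?thesis
        by (rule eventually_mono) (use True in \<open>auto simp: S_def d_def\<close>)
    next
      case False
      then obtain j where j: "j < \<rho>" "j \<noteq> i" "\<not> (a i + u i x (Q0 i) < a j + u j x (Q0 j))"
        unfolding S_def by auto
      then have "d0 j < 0" using ne[OF j(1,2)] unfolding d0_def by auto
      from order_tendstoD(2)[OF dlim[OF j(1)] this]
      show ?thesis
        by (rule eventually_mono) (use False j in \<open>auto simp: S_def d_def\<close>)
    qed
  qed
qed

lemma obj_cont:
  assumes Qs: "\<And>n. Qs n \<in> Gamma \<Omega> \<rho> P p" and Q0: "Q0 \<in> Gamma \<Omega> \<rho> P p"
    and lim: "\<And>i. i < \<rho> \<Longrightarrow> (\<lambda>n. Qs n i) \<longlonglongrightarrow> Q0 i"
  shows "(\<lambda>n. upper_obj \<Omega> \<rho> P p a u D B I C L (Qs n)) \<longlonglongrightarrow> upper_obj \<Omega> \<rho> P p a u D B I C L Q0"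
proof -
  have vlim: "(\<lambda>n. Qs n i - p i) \<longlonglongrightarrow> Q0 i - p i" if "i < \<rho>" for i
    using lim[OF that] by (intro tendsto_intros)
  have poly_dc: "dconv f (\<lambda>n. translate_poly (P i) (p i) (Qs n i)) (translate_poly (P i) (p i) (Q0 i))"
    if f: "integrable lebesgue f" "\<And>x. f x \<ge> 0" and i: "i < \<rho>" for f i
    unfolding translate_poly_eq
    using P_compact i by (intro dconv_transl[OF f(1) f(2) _ _ vlim[OF i]]) (auto simp: lmeasurable_compact compact_imp_bounded)
  have int_dc: "dconv fD (\<lambda>n. interior (translate_poly (P i) (p i) (Qs n i))) (interior (translate_poly (P i) (p i) (Q0 i)))"
    if i: "i < \<rho>" for i
  proof -
    have b: "bounded (interior (P i))"
      using P_compact i by (meson bounded_subset compact_imp_bounded interior_subset)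
    show ?thesis unfolding interior_translate_poly
      using b by (intro dconv_transl[OF fD_int fD_nonneg _ _ vlim[OF i]]) (auto simp: lmeasurable_open)
  qed
  have fr_dc: "dconv fD (\<lambda>n. free_region \<Omega> \<rho> P p (Qs n)) (free_region \<Omega> \<rho> P p Q0)"
    unfolding free_region_def
    by (intro dconv_Diff[OF fD_int fD_nonneg] dconv_const \<Omega>_sets dconv_UN[OF fD_int fD_nonneg]) (auto intro: int_dc)
  have ah_dc: "dconv fD (\<lambda>n. A_hat \<Omega> \<rho> P p a u (Qs n) i) (A_hat \<Omega> \<rho> P p a u Q0 i)" if i: "i < \<rho>" for i
    unfolding A_hat_eq
    using S_open[OF i]
    by (intro dconv_Int_ae[OF fD_int fD_nonneg fr_dc] ae_S[OF Q0 i lim]) (auto simp: borel_open)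
  have un_dc: "dconv fD (\<lambda>n. \<Union>i<\<rho>. translate_poly (P i) (p i) (Qs n i)) (\<Union>i<\<rho>. translate_poly (P i) (p i) (Q0 i))"
    by (intro dconv_UN[OF fD_int fD_nonneg] poly_dc[OF fD_int fD_nonneg]) auto
  have Bl: "(\<lambda>n. LINT q:translate_poly (P i) (p i) (Qs n i)|lebesgue. B q) \<longlonglongrightarrow> (LINT q:translate_poly (P i) (p i) (Q0 i)|lebesgue. B q)"
    if i: "i < \<rho>" for i
    unfolding lint_eq[OF Gamma_sub[OF Qs i]] lint_eq[OF Gamma_sub[OF Q0 i]]
    using dconv_integral[OF fB_int fB_nonneg poly_dc[OF fB_int fB_nonneg i]] by (simp add: fB_def)
  have Al: "(\<lambda>n. LINT q:A_hat \<Omega> \<rho> P p a u (Qs n) i|lebesgue. D q) \<longlonglongrightarrow> (LINT q:A_hat \<Omega> \<rho> P p a u Q0 i|lebesgue. D q)"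
    if i: "i < \<rho>" for i
    unfolding lint_eq[OF A_hat_sub] 
    using dconv_integral[OF fD_int fD_nonneg ah_dc[OF i]] by (simp add: fD_def)
  have Ul: "(\<lambda>n. LINT q:(\<Union>i<\<rho>. translate_poly (P i) (p i) (Qs n i))|lebesgue. D q) \<longlonglongrightarrow> (LINT q:(\<Union>i<\<rho>. translate_poly (P i) (p i) (Q0 i))|lebesgue. D q)"
    unfolding lint_eq[OF union_sub[OF Qs]] lint_eq[OF union_sub[OF Q0]]
    using dconv_integral[OF fD_int fD_nonneg un_dc] by (simp add: fD_def)
  show ?thesis
    unfolding upper_obj_def
  proof (intro tendsto_add tendsto_sum)
    fix i assume "i \<in> {..<\<rho>}"
    then have i: "i < \<rho>" by simp
    show "(\<lambda>n. I i (LINT q:translate_poly (P i) (p i) (Qs n i)|lebesgue. B q)) \<longlonglongrightarrow> I i (LINT q:translate_poly (P i) (p i) (Q0 i)|lebesgue. B q)"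
      using I_props i by (intro continuous_on_tendsto_compose[OF _ Bl[OF i]]) auto
    show "(\<lambda>n. C i (LINT q:A_hat \<Omega> \<rho> P p a u (Qs n) i|lebesgue. D q)) \<longlonglongrightarrow> C i (LINT q:A_hat \<Omega> \<rho> P p a u Q0 i|lebesgue. D q)"
      using C_props i mass01[OF A_hat_sub A_hat_sets[OF i]]
      by (intro continuous_on_tendsto_compose[OF _ Al[OF i]]) auto
  next
    show "(\<lambda>n. L (LINT q:(\<Union>i<\<rho>. translate_poly (P i) (p i) (Qs n i))|lebesgue. D q)) \<longlonglongrightarrow> L (LINT q:(\<Union>i<\<rho>. translate_poly (P i) (p i) (Q0 i))|lebesgue. D q)"
      using L_props mass01[OF union_sub[OF Qs] union_sets] mass01[OF union_sub[OF Q0] union_sets]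
      by (intro continuous_on_tendsto_compose[OF _ Ul]) auto
  qed
qed

end



context setting
begin

lemma Gamma_limit:
  assumes Qs: "\<And>n. Qs n \<in> Gamma \<Omega> \<rho> P p" and lim: "\<And>i. i < \<rho> \<Longrightarrow> (\<lambda>n. Qs n i) \<longlonglongrightarrow> Q0 i"
    and ext: "Q0 \<in> {..<\<rho>} \<rightarrow>\<^sub>E UNIV"
  shows "Q0 \<in> Gamma \<Omega> \<rho> P p"
  unfolding Gamma_def
proof (intro CollectI conjI allI impI ext)
  fix i assume i: "i < \<rho>"
  show "Q0 i \<in> feas_root \<Omega> (P i) (p i)"
    unfolding feas_root_def
  proof (intro CollectI subsetI)
    fix y assume "y \<in> translate_poly (P i) (p i) (Q0 i)"
    then obtain x where x: "x \<in> P i" "y = (Q0 i - p i) + x" unfolding translate_poly_eq by auto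
    have t: "(\<lambda>n. (Qs n i - p i) + x) \<longlonglongrightarrow> (Q0 i - p i) + x"
      using lim[OF i] by (intro tendsto_intros)
    have "\<forall>n. (Qs n i - p i) + x \<in> \<Omega>"
      using Gamma_sub[OF Qs i] x(1) unfolding translate_poly_eq by auto
    then have "(Q0 i - p i) + x \<in> \<Omega>"
      using Lim_in_closed_set[OF compact_imp_closed[OF \<Omega>_compact] _ _ t] by auto
    then show "y \<in> \<Omega>" using x by simp
  qed
next
  fix i j assume i: "i < \<rho>" and j: "j < \<rho>" and ij: "i \<noteq> j"
  show "interior (translate_poly (P i) (p i) (Q0 i)) \<inter> interior (translate_poly (P j) (p j) (Q0 j)) = {}"
  proof (rule ccontr)
    assume "interior (translate_poly (P i) (p i) (Q0 i)) \<inter> interior (translate_poly (P j) (p j) (Q0 j)) \<noteq> {}"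
    then obtain z where z: "z \<in> interior (translate_poly (P i) (p i) (Q0 i))" "z \<in> interior (translate_poly (P j) (p j) (Q0 j))"
      by blast
    have mem: "z - (Q k - p k) \<in> interior (P k) \<longleftrightarrow> z \<in> interior (translate_poly (P k) (p k) (Q k))" for Q k
      unfolding interior_translate_poly by (auto simp: image_iff intro!: bexI[of _ "z - (Q k - p k)"])
    have ev: "eventually (\<lambda>n. z \<in> interior (translate_poly (P k) (p k) (Qs n k))) sequentially"
      if k: "k < \<rho>" "z \<in> interior (translate_poly (P k) (p k) (Q0 k))" for k
    proof -
      have t: "(\<lambda>n. z - (Qs n k - p k)) \<longlonglongrightarrow> z - (Q0 k - p k)"
        using lim[OF k(1)] by (intro tendsto_intros)
      have "eventually (\<lambda>n. z - (Qs n k - p k) \<in> interior (P k)) sequentially"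
        using topological_tendstoD[OF t open_interior] mem k(2) by blast
      then show ?thesis by (rule eventually_mono) (simp add: mem)
    qed
    have "eventually (\<lambda>n. z \<in> interior (translate_poly (P i) (p i) (Qs n i)) \<and> z \<in> interior (translate_poly (P j) (p j) (Qs n j))) sequentially"
      using ev[OF i z(1)] ev[OF j z(2)] by (rule eventually_conj)
    then obtain n where "z \<in> interior (translate_poly (P i) (p i) (Qs n i))" "z \<in> interior (translate_poly (P j) (p j) (Qs n j))"
      using eventually_happens'[OF trivial_limit_sequentially] by blast
    moreover have "interior (translate_poly (P i) (p i) (Qs n i)) \<inter> interior (translate_poly (P j) (p j) (Qs n j)) = {}"
      using Qs[of n] i j ij unfolding Gamma_def by auto
    ultimately show False by blast
  qed
qed

lemma exists_min:
  assumes ne: "Gamma \<Omega> \<rho> P p \<noteq> {}"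
  shows "\<exists>Q\<in>Gamma \<Omega> \<rho> P p. \<forall>Q'\<in>Gamma \<Omega> \<rho> P p.
           upper_obj \<Omega> \<rho> P p a u D B I C L Q \<le> upper_obj \<Omega> \<rho> P p a u D B I C L Q'"
proof -
  let ?G = "Gamma \<Omega> \<rho> P p"
  let ?F = "upper_obj \<Omega> \<rho> P p a u D B I C L"
  define m where "m = Inf (?F ` ?G)"
  have bdd: "bdd_below (?F ` ?G)" using obj_nonneg by (auto intro!: bdd_belowI[of _ 0])
  have "\<exists>Q\<in>?G. ?F Q < m + inverse (real (Suc n))" for n
  proof -
    have "Inf (?F ` ?G) < m + inverse (real (Suc n))" unfolding m_def by simp
    then show ?thesis using cInf_lessD[of "?F ` ?G"] ne by auto
  qed
  then obtain Qs where Qs: "\<And>n. Qs n \<in> ?G" and Qsm: "\<And>n. ?F (Qs n) < m + inverse (real (Suc n))"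
    by metis
  have inK: "\<forall>n. \<forall>i<\<rho>. Qs n i \<in> \<Omega>"
  proof (intro allI impI)
    fix n i assume i: "i < \<rho>"
    have "Qs n i \<in> translate_poly (P i) (p i) (Qs n i)"
      unfolding translate_poly_eq using p_in i by (auto simp: image_iff intro!: bexI[of _ "p i"])
    then show "Qs n i \<in> \<Omega>" using Gamma_sub[OF Qs i] by auto
  qed
  obtain r l where r: "strict_mono r" and l: "\<forall>i<\<rho>. l i \<in> \<Omega> \<and> (\<lambda>n. Qs (r n) i) \<longlonglongrightarrow> l i"
    using seq_extract[OF \<Omega>_compact inK] by blast
  define Q0 where "Q0 i = (if i < \<rho> then l i else undefined)" for i
  have lim: "(\<lambda>n. Qs (r n) i) \<longlonglongrightarrow> Q0 i" if "i < \<rho>" for i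
    using l that by (simp add: Q0_def)
  have ext: "Q0 \<in> {..<\<rho>} \<rightarrow>\<^sub>E UNIV" by (auto simp: Q0_def PiE_def extensional_def)
  have Q0G: "Q0 \<in> ?G" by (rule Gamma_limit[OF Qs lim ext])
  have c: "(\<lambda>n. ?F (Qs (r n))) \<longlonglongrightarrow> ?F Q0" by (rule obj_cont[OF Qs Q0G lim])
  have c2: "(\<lambda>n. ?F (Qs (r n))) \<longlonglongrightarrow> m"
  proof (rule tendsto_sandwich[of "\<lambda>_. m" _ sequentially "\<lambda>n. m + inverse (real (Suc n))"])
    show "eventually (\<lambda>n. m \<le> ?F (Qs (r n))) sequentially"
      using Qs bdd unfolding m_def by (intro always_eventually allI cInf_lower) auto
    show "eventually (\<lambda>n. ?F (Qs (r n)) \<le> m + inverse (real (Suc n))) sequentially"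
    proof (rule always_eventually, rule allI)
      fix n
      have "n \<le> r n" using r by (rule seq_suble)
      then have "inverse (real (Suc (r n))) \<le> inverse (real (Suc n))" by (simp add: field_simps)
      then show "?F (Qs (r n)) \<le> m + inverse (real (Suc n))" using Qsm[of "r n"] by linarith
    qed
    show "(\<lambda>n. m + inverse (real (Suc n))) \<longlonglongrightarrow> m"
      using tendsto_add[OF tendsto_const LIMSEQ_inverse_real_of_nat, of m] by simp
  qed simp
  have eq: "?F Q0 = m" using LIMSEQ_unique[OF c c2] .
  show ?thesis
  proof (intro bexI[OF _ Q0G] ballI)
    fix Q' assume "Q' \<in> ?G"
    then have "m \<le> ?F Q'" unfolding m_def using bdd by (intro cInf_lower) auto
    then show "?F Q0 \<le> ?F Q'" using eq by simp
  qed
qed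

end

theorem theorem2:
  fixes \<Omega> :: "pt set" and D B :: "pt \<Rightarrow> real" and \<rho> :: nat
    and P :: "nat \<Rightarrow> pt set" and p :: "nat \<Rightarrow> pt"
    and u :: "nat \<Rightarrow> pt \<Rightarrow> pt \<Rightarrow> real" and a :: "nat \<Rightarrow> real"
    and I C :: "nat \<Rightarrow> real \<Rightarrow> real" and L :: "real \<Rightarrow> real"
  assumes \<Omega>_compact: "compact \<Omega>"
    and D_nonneg: "\<forall>q\<in>\<Omega>. D q \<ge> 0"
    and D_meas: "set_borel_measurable lebesgue \<Omega> D"
    and D_L2: "set_integrable lebesgue \<Omega> (\<lambda>q. (D q)^2)"
    and D_total: "(LINT q:\<Omega>|lebesgue. D q) = 1"
    and B_nonneg: "\<forall>q\<in>\<Omega>. B q \<ge> 0"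
    and B_meas: "set_borel_measurable lebesgue \<Omega> B"
    and B_L2: "set_integrable lebesgue \<Omega> (\<lambda>q. (B q)^2)"
    and B_fin: "set_integrable lebesgue \<Omega> B"
    and P_compact: "\<forall>i<\<rho>. compact (P i)"
    and P_shape: "\<forall>i<\<rho>. \<exists>U. open U \<and> connected U \<and> U \<noteq> {} \<and> P i = closure U"
    and p_in: "\<forall>i<\<rho>. p i \<in> P i"
    and Gamma_ne: "Gamma \<Omega> \<rho> P p \<noteq> {}"
    and u_cont: "\<forall>i<\<rho>. continuous_on UNIV (\<lambda>(x, y). u i x y)"
    and a_pos: "\<forall>i<\<rho>. a i > 0"
    and ties_negl: "\<forall>Q\<in>Gamma \<Omega> \<rho> P p. \<forall>i<\<rho>. \<forall>j<\<rho>. i \<noteq> j \<longrightarrow>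
        D_negligible D {q \<in> free_region \<Omega> \<rho> P p Q. a i + u i q (Q i) = a j + u j q (Q j)}"
    and I_props: "\<forall>i<\<rho>. (\<forall>x. I i x \<ge> 0) \<and> mono (I i) \<and> continuous_on UNIV (I i)"
    and C_props: "\<forall>i<\<rho>. (\<forall>x\<in>{0..1}. C i x \<ge> 0) \<and> mono_on {0..1} (C i) \<and> continuous_on {0..1} (C i)"
    and L_props: "(\<forall>x\<in>{0..1}. L x \<ge> 0) \<and> mono_on {0..1} L \<and> continuous_on {0..1} L"
  shows "\<exists>Q\<in>Gamma \<Omega> \<rho> P p. \<forall>Q'\<in>Gamma \<Omega> \<rho> P p.
           upper_obj \<Omega> \<rho> P p a u D B I C L Q \<le> upper_obj \<Omega> \<rho> P p a u D B I C L Q'"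
  proof -
  have "setting \<Omega> D B \<rho> P p u a I C L"
    unfolding setting_def using assms by blast
  then interpret setting \<Omega> D B \<rho> P p u a I C L .
  show ?thesis by (rule exists_min[OF Gamma_ne])
qed

end
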